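(* For every integer $z>0$, almost surely $$\lim_{n\to\infty}\frac{\Xi^*(\{0,z\},n)}{\log n}=\frac{-1}{\log\left(\frac{2q+h^{z/2}}{1+h^{z/2}}\right)}.$$
   Context: Let $0<q<p<1$ with $p+q=1$ and set $h=q/p$. Let $X_1,X_2,\dots$ be i.i.d. with $\mathbf P(X_1=1)=p$, $\mathbf P(X_1=-1)=q$, $S_0=0$, $S_n=X_1+\dots+X_n$. For $z\in\mathbb Z$, $n\ge1$, let $\xi(z,n)=\#\{k:0<k\le n,\ S_k=z\}$. For $A\subset\mathbb Z$ let $\Xi(A,n)=\sum_{z\in A}\xi(z,n)$ (the occupation time of $A$ up to time $n$), and $\Xi^*(A,n)=\max_{a\in\mathbb Z}\Xi(A+a,n)$ where $A+a=\{x+a:x\in A\}$. *)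

theory Defs
  imports "HOL-Probability.Probability"
begin

text \<open>The steps X_1, X_2, ... of the paper are X 0, X 1, ... here, so
  S_k = X_1 + ... + X_k is rw_S X k = sum of X i for i < k, and S_0 = 0.\<close>
definition rw_S :: "(nat \<Rightarrow> 'a \<Rightarrow> int) \<Rightarrow> nat \<Rightarrow> 'a \<Rightarrow> int" where
  "rw_S X k \<omega> = (\<Sum>i<k. X i \<omega>)"

definition rw_xi :: "(nat \<Rightarrow> 'a \<Rightarrow> int) \<Rightarrow> int \<Rightarrow> nat \<Rightarrow> 'a \<Rightarrow> nat" where
  "rw_xi X z n \<omega> = card {k \<in> {1..n}. rw_S X k \<omega> = z}"

definition rw_Xi :: "(nat \<Rightarrow> 'a \<Rightarrow> int) \<Rightarrow> int set \<Rightarrow> nat \<Rightarrow> 'a \<Rightarrow> nat" where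
  "rw_Xi X A n \<omega> = (\<Sum>z\<in>A. rw_xi X z n \<omega>)"

text \<open>Xi*(A,n) = max over integer shifts a of Xi(A+a,n) (a bounded set of naturals,
  so the supremum is the maximum).\<close>
definition rw_Xi_star :: "(nat \<Rightarrow> 'a \<Rightarrow> int) \<Rightarrow> int set \<Rightarrow> nat \<Rightarrow> 'a \<Rightarrow> nat" where
  "rw_Xi_star X A n \<omega> = Sup (range (\<lambda>a::int. rw_Xi X ((\<lambda>x. x + a) ` A) n \<omega>))"

end

theory Submission
  imports Defs
begin


definition Wn :: "nat \<Rightarrow> int list set" where "Wn n = {w. length w = n \<and> set w \<subseteq> {-1,1}}"

lemma Wn_0: "Wn 0 = {[]}" by (auto simp: Wn_def)

lemma Wn_Suc: "Wn (Suc n) = (Cons 1) ` Wn n \<union> (Cons (-1)) ` Wn n"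
  by (auto simp: Wn_def length_Suc_conv image_iff)

lemma finite_Wn: "finite (Wn n)"
  by (induction n) (auto simp: Wn_0 Wn_Suc)

lemma sum_Wn_Suc: "(\<Sum>w\<in>Wn (Suc n). f w) = (\<Sum>w\<in>Wn n. f (1#w)) + (\<Sum>w\<in>Wn n. f ((-1)#w))"
proof -
  have "(\<Sum>w\<in>Wn (Suc n). f w) = (\<Sum>w\<in>(Cons 1) ` Wn n. f w) + (\<Sum>w\<in>(Cons (-1)) ` Wn n. f w)"
    unfolding Wn_Suc by (rule sum.union_disjoint) (auto simp: finite_Wn)
  also have "\<dots> = (\<Sum>w\<in>Wn n. f (1#w)) + (\<Sum>w\<in>Wn n. f ((-1)#w))"
    by (subst (1 2) sum.reindex) (auto simp: inj_on_def)
  finally show ?thesis .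
qed

locale rw =
  fixes p q :: real and z :: int
  assumes q0: "0 < q" and qp: "q < p" and pq1: "p + q = 1" and z0: "z > 0"
begin

definition "h = q / p"
definition "s = h powr (real_of_int z / 2)"
definition "lam = (2 * q + s) / (1 + s)"
definition "sig = sqrt h"
definition "r = 2 * sqrt (p * q)"

lemma p0: "0 < p" using q0 qp by simp
lemma h0: "0 < h" and h1: "h < 1" using q0 qp p0 by (auto simp: h_def)
lemma s0: "0 < s" using h0 by (simp add: s_def)
lemma s1: "s < 1" using h0 h1 z0 powr_less_mono'[of h 0 "real_of_int z / 2"] unfolding s_def by auto
lemma s2: "s * s = h powr z"
  using h0 by (simp add: s_def powr_add[symmetric])
lemma lam0: "0 < lam" and lam1: "lam < 1"
  using s0 q0 qp pq1 by (auto simp: lam_def field_simps)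
lemma ph: "p * h = q" using p0 by (simp add: h_def)

definition g :: "int \<Rightarrow> real" where
  "g x = (if x \<le> 0 then 1 else if x \<le> z then (s + h powr x) / (1 + s) else h powr x / s)"
definition psi :: "int \<Rightarrow> real" where
  "psi x = (if x \<in> {0, z} then g x else g x / lam)"
definition wt :: "int list \<Rightarrow> real" where
  "wt w = prod_list (map (\<lambda>e. if e = 1 then p else q) w)"

lemma g_mid: "0 \<le> x \<Longrightarrow> x \<le> z \<Longrightarrow> g x = (s + h powr x) / (1 + s)"
  using s0 h0 by (auto simp: g_def)

lemma g_right: "z \<le> x \<Longrightarrow> g x = h powr x / s"
proof -
  assume a: "z \<le> x"
  show ?thesis
  proof (cases "x = z")
    case True
    have "(s + h powr z) / (1 + s) = h powr z / s"
      using s0 s2[symmetric] by (simp add: field_simps)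
    then show ?thesis using True z0 h0 by (simp add: g_def)
  qed (use a z0 in \<open>auto simp: g_def\<close>)
qed

lemma hp1: "h powr (real_of_int (x + 1)) = h powr x * h"
  using h0 by (simp add: powr_add)
lemma hm1: "h powr (real_of_int (x - 1)) = h powr x / h"
  using h0 by (simp add: powr_diff)


lemma qh: "q / h = p" using p0 q0 by (simp add: h_def)
lemma p_eq: "p = 1 - q" using pq1 by simp
lemma pq_lin: "p * t + q * t = t"
proof - have "p * t + q * t = (p + q) * t" by (simp add: algebra_simps)
  then show ?thesis using pq1 by simp qed

lemma harm: "p * g (x + 1) + q * g (x - 1) = lam * psi x"
proof -
  define A where "A = h powr x"
  have hp: "h powr (real_of_int x + 1) = A * h" and hm: "h powr (real_of_int x - 1) = A / h"
    unfolding A_def using hp1[of x] hm1[of x] by simp_all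
  have s1p: "1 + s \<noteq> 0" using s0 by simp
  consider "x < 0" | "x = 0" | "0 < x \<and> x < z" | "x = z" | "z < x" by linarith
  then show ?thesis
  proof cases
    case 1 then show ?thesis using lam0 pq1 z0 by (simp add: g_def psi_def)
  next
    case 2
    have "p * ((s + h) / (1 + s)) + q = lam"
      using s0 ph pq_lin[of s] by (simp add: lam_def field_simps)
    then show ?thesis using 2 z0 h0 by (simp add: g_mid g_def psi_def)
  next
    case 3
    have num: "p * (s + A * h) + q * (s + A / h) = s + A"
    proof -
      have "p * (s + A * h) + q * (s + A / h) = (p + q) * s + A * (p * h) + A * (q / h)"
        by (simp add: algebra_simps)
      also have "\<dots> = s + A" using pq1 ph qh pq_lin[of A] by (simp add: algebra_simps)
      finally show ?thesis .
    qed
    have e: "p * ((s + A * h) / (1 + s)) + q * ((s + A / h) / (1 + s)) = (s + A) / (1 + s)"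
      using num s1p by (simp add: add_divide_distrib[symmetric])
    have "psi x = g x / lam" using 3 by (simp add: psi_def)
    then show ?thesis using 3 lam0 e by (simp add: g_mid hp hm A_def)
  next
    case 4
    have Az: "A = s * s" using 4 s2 by (simp add: A_def)
    have num: "p * (A * h / s) * (1 + s) + q * (s + A / h) = (2 * q + s) * s"
    proof -
      have "p * (A * h / s) * (1 + s) + q * (s + A / h) = (p * h) * s * (1 + s) + q * s + (q / h) * (s * s)"
        unfolding Az using s0 by (simp add: field_simps)
      also have "\<dots> = q * s * (1 + s) + q * s + p * (s * s)" by (simp only: ph qh)
      also have "\<dots> = (2 * q + s) * s" by (simp add: p_eq algebra_simps)
      finally show ?thesis .
    qed
    have e: "p * (A * h / s) + q * ((s + A / h) / (1 + s)) = lam * s"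
    proof -
      have "p * (A * h / s) + q * ((s + A / h) / (1 + s)) = (p * (A * h / s) * (1 + s) + q * (s + A / h)) / (1 + s)"
        using s1p by (simp add: field_simps)
      then show ?thesis using num unfolding lam_def by simp
    qed
    have gz: "g z = s"
    proof -
      have "g z = h powr z / s" using g_right[of z] by simp
      also have "\<dots> = (s * s) / s" using s2 by simp
      finally show ?thesis using s0 by simp
    qed
    have hz: "h powr (real_of_int z + 1) = A * h" "h powr (real_of_int z - 1) = A / h"
      using hp hm 4 by simp_all
    have g1: "g (z + 1) = A * h / s" using g_right[of "z+1"] hz by simp
    have g2: "g (z - 1) = (s + A / h) / (1 + s)" using g_mid[of "z-1"] hz z0 by simp
    show ?thesis using 4 e gz g1 g2 by (simp add: psi_def)
  next
    case 5
    have e: "p * (A * h / s) + q * (A / h / s) = A / s"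
    proof -
      have "p * (A * h / s) + q * (A / h / s) = (A / s) * (p * h + q / h)" by (simp add: algebra_simps)
      then show ?thesis using ph qh pq1 by (simp add: add.commute)
    qed
    have "psi x = g x / lam" using 5 z0 by (auto simp: psi_def)
    then show ?thesis using 5 lam0 e by (simp add: g_right hp hm A_def)
  qed
qed


end


context rw begin

lemma wt_Nil: "wt [] = 1" by (simp add: wt_def)
lemma wt_Cons: "wt (e # w) = (if e = 1 then p else q) * wt w" by (simp add: wt_def)
lemma wt_nonneg: "0 \<le> wt w" using p0 q0 unfolding wt_def by (induction w) auto

lemma sum_wt: "(\<Sum>w\<in>Wn n. wt w) = 1"
  by (induction n) (simp_all add: Wn_0 sum_Wn_Suc wt_Cons wt_Nil flip: sum_distrib_left add: pq1)

lemma g_pos: "0 < g x" using s0 h0 by (auto simp: g_def intro!: add_pos_pos divide_pos_pos)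

lemma g_le1: "g x \<le> 1"
proof -
  consider "x \<le> 0" | "0 < x \<and> x \<le> z" | "z < x" by linarith
  then show ?thesis
  proof cases
    case 2
    have "h powr x \<le> h powr 0" using h0 h1 2 by (intro powr_mono') auto
    then show ?thesis using 2 s0 h0 by (simp add: g_def)
  next
    case 3
    have "h powr x \<le> h powr z" using h0 h1 3 by (intro powr_mono') auto
    then have "h powr x / s \<le> (s * s) / s" using s0 s2 by (simp add: divide_right_mono)
    moreover have "(s * s) / s = s" using s0 by simp
    ultimately have "h powr x / s \<le> 1" using s1 by linarith
    then show ?thesis using g_right[of x] 3 by simp
  qed (simp add: g_def)
qed

lemma psi_pos: "0 < psi x" using g_pos lam0 by (simp add: psi_def)
lemma psi_0: "psi 0 = 1" by (simp add: psi_def g_def)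
lemma psi_z: "psi z = s"
proof -
  have "g z = h powr z / s" using g_right[of z] by simp
  also have "\<dots> = (s * s) / s" using s2 by simp
  finally show ?thesis using s0 by (simp add: psi_def)
qed
lemma psi_le: "psi x \<le> g x / lam"
  using g_pos[of x] lam0 lam1 by (auto simp: psi_def field_simps)
lemma psi_le1: "psi x \<le> 1 / lam"
  using psi_le[of x] g_le1[of x] lam0 by (smt (verit) divide_right_mono)

lemma g_le_sig: "g x \<le> 2 * sig powr x"
proof -
  have sg: "sig powr y = h powr (y / 2)" for y
    using h0 by (simp add: sig_def powr_powr flip: powr_half_sqrt)
  consider "x \<le> 0" | "0 < x \<and> x \<le> z" | "z < x" by linarith
  then show ?thesis
  proof cases
    case 1
    have "h powr 0 \<le> h powr (x / 2)" using h0 h1 1 by (intro powr_mono') auto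
    then show ?thesis using 1 h0 by (simp add: g_def sg)
  next
    case 2
    have a: "h powr x \<le> h powr (x / 2)" using h0 h1 2 by (intro powr_mono') auto
    have b: "s \<le> h powr (x / 2)" unfolding s_def using h0 h1 2 by (intro powr_mono') auto
    have "(s + h powr x) / (1 + s) \<le> s + h powr x" using s0 h0
      by (simp add: divide_le_eq_1 field_simps add_increasing2)
    then show ?thesis using a b 2 by (simp add: g_def sg)
  next
    case 3
    have "h powr x / s = h powr (x - z / 2)" using h0 by (simp add: s_def powr_diff)
    also have "\<dots> \<le> h powr (x / 2)" using h0 h1 3 by (intro powr_mono') auto
    finally have "g x \<le> h powr (x / 2)" using g_right[of x] 3 by simp
    moreover have "0 \<le> h powr (x / 2)" by simp
    ultimately show ?thesis unfolding sg by linarith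
  qed
qed

lemma psi_le_sig: "psi x \<le> 2 * sig powr x / lam"
  using psi_le[of x] g_le_sig[of x] lam0 by (smt (verit) divide_right_mono)

lemma sum_sig: "(\<Sum>w\<in>Wn n. wt w * sig powr (real_of_int (x + sum_list w))) = sig powr x * r ^ n"
proof (induction n arbitrary: x)
  case 0 then show ?case by (simp add: Wn_0 wt_def)
next
  case (Suc n)
  have sig0: "0 < sig" using h0 by (simp add: sig_def)
  have e: "p * sig + q / sig = r"
  proof -
    have "p * sig = sqrt (p * q)" using p0 q0
      by (simp add: sig_def h_def real_sqrt_divide real_sqrt_mult field_simps)
    moreover have "q / sig = sqrt (p * q)" using p0 q0
      by (simp add: sig_def h_def real_sqrt_divide real_sqrt_mult field_simps)
    ultimately show ?thesis by (simp add: r_def)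
  qed
  have "(\<Sum>w\<in>Wn (Suc n). wt w * sig powr (real_of_int (x + sum_list w)))
     = p * (\<Sum>w\<in>Wn n. wt w * sig powr (real_of_int ((x + 1) + sum_list w)))
       + q * (\<Sum>w\<in>Wn n. wt w * sig powr (real_of_int ((x - 1) + sum_list w)))"
    by (simp add: sum_Wn_Suc wt_Cons sum_distrib_left algebra_simps)
  also have "\<dots> = p * (sig powr (x + 1) * r ^ n) + q * (sig powr (x - 1) * r ^ n)"
    by (simp only: Suc.IH)
  also have "\<dots> = sig powr x * r ^ n * (p * sig + q / sig)"
    using sig0 by (simp add: powr_add powr_diff algebra_simps)
  finally show ?case using e by simp
qed

end


context rw begin

fun cnt :: "int \<Rightarrow> int list \<Rightarrow> nat" where
  "cnt x [] = 0"
| "cnt x (e # w) = (if x + e \<in> {0, z} then 1 else 0) + cnt (x + e) w"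

fun H :: "nat \<Rightarrow> int \<Rightarrow> int list \<Rightarrow> real" where
  "H k x [] = psi x"
| "H k x (e # w) = (if x + e \<in> {0, z} then (if k \<le> 1 then psi (x + e) / lam else H (k - 1) (x + e) w / lam)
      else H k (x + e) w)"

lemma psi_set: "y \<in> {0, z} \<Longrightarrow> psi y = g y" by (simp add: psi_def)

lemma H_mart: "1 \<le> k \<Longrightarrow> (\<Sum>w\<in>Wn n. wt w * H k x w) = psi x"
proof (induction n arbitrary: k x)
  case 0
  then show ?case by (simp add: Wn_0 wt_Nil)
next
  case (Suc n)
  have st: "(\<Sum>w\<in>Wn n. wt w * H k x (e # w)) = g (x + e) / lam" if "1 \<le> k" for k x e
  proof (cases "x + e \<in> {0, z}")
    case True
    show ?thesis
    proof (cases "k \<le> 1")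
      case True
      then show ?thesis using \<open>x + e \<in> {0, z}\<close> psi_set[of "x+e"]
        by (simp add: sum_distrib_right[symmetric] sum_wt flip: times_divide_eq_right)
    next
      case False
      then have "(\<Sum>w\<in>Wn n. wt w * H k x (e # w)) = (\<Sum>w\<in>Wn n. wt w * H (k - 1) (x + e) w) / lam"
        using True by (simp add: sum_divide_distrib)
      also have "\<dots> = psi (x + e) / lam" using False Suc.IH[of "k - 1" "x + e"] by simp
      finally show ?thesis using True psi_set[of "x+e"] by simp
    qed
  next
    case False
    then have "(\<Sum>w\<in>Wn n. wt w * H k x (e # w)) = (\<Sum>w\<in>Wn n. wt w * H k (x + e) w)" by simp
    also have "\<dots> = psi (x + e)" using that Suc.IH by simp
    finally show ?thesis using False by (simp add: psi_def)
  qed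
  {
    have "(\<Sum>w\<in>Wn (Suc n). wt w * H k x w)
        = p * (\<Sum>w\<in>Wn n. wt w * H k x (1 # w)) + q * (\<Sum>w\<in>Wn n. wt w * H k x ((-1) # w))"
      by (simp add: sum_Wn_Suc wt_Cons sum_distrib_left mult.assoc del: H.simps)
    also have "\<dots> = (p * g (x + 1) + q * g (x - 1)) / lam"
      using st[OF Suc.prems, of x 1] st[OF Suc.prems, of x "-1"] by (simp add: add_divide_distrib del: H.simps)
    also have "\<dots> = psi x" using harm[of x] lam0 by simp
    finally show ?case . }
qed

lemma H_nonneg: "0 \<le> H k x w"
  using psi_pos lam0 by (induction k x w rule: H.induct) (auto simp: less_imp_le)

lemma H_hi: "1 \<le> k \<Longrightarrow> k \<le> cnt x w \<Longrightarrow> s / lam ^ k \<le> H k x w \<and> H k x w \<le> 1 / lam ^ k"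
proof (induction w arbitrary: k x)
  case Nil then show ?case by simp
next
  case (Cons e w)
  show ?case
  proof (cases "x + e \<in> {0, z}")
    case True
    then have ps: "s \<le> psi (x + e) \<and> psi (x + e) \<le> 1" using psi_0 psi_z s1 by auto
    show ?thesis
    proof (cases "k \<le> 1")
      case True
      then have "k = 1" using Cons.prems by simp
      have "H k x (e # w) = psi (x + e) / lam" using True \<open>x + e \<in> {0, z}\<close> by simp
      moreover have "s / lam \<le> psi (x + e) / lam" "psi (x + e) / lam \<le> 1 / lam"
        using ps lam0 by (auto intro: divide_right_mono)
      ultimately show ?thesis using \<open>k = 1\<close> by simp
    next
      case False
      then have "s / lam ^ (k - 1) \<le> H (k - 1) (x + e) w \<and> H (k - 1) (x + e) w \<le> 1 / lam ^ (k - 1)"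
        using Cons.prems True by (intro Cons.IH) auto
      moreover have "lam ^ k = lam ^ (k - 1) * lam" using False
        by (cases k) (auto simp: power_Suc2)
      moreover have "H k x (e # w) = H (k - 1) (x + e) w / lam" using True False by simp
      ultimately show ?thesis using lam0
        by (auto simp: divide_right_mono simp flip: divide_divide_eq_left)
    qed
  next
    case False
    then have "k \<le> cnt (x + e) w" using Cons.prems by simp
    from Cons.IH[OF Cons.prems(1) this] show ?thesis using False by simp
  qed
qed

lemma H_lo: "1 \<le> k \<Longrightarrow> cnt x w < k \<Longrightarrow> H k x w = psi (x + sum_list w) / lam ^ (cnt x w)"
proof (induction w arbitrary: k x)
  case Nil then show ?case by simp
next
  case (Cons e w)
  show ?case
  proof (cases "x + e \<in> {0, z}")
    case True
    then have k2: "\<not> k \<le> 1" and c: "cnt (x + e) w < k - 1" using Cons.prems by auto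
    have "H (k - 1) (x + e) w = psi (x + e + sum_list w) / lam ^ (cnt (x + e) w)"
      using Cons.IH[of "k - 1" "x + e"] k2 c by linarith
    then show ?thesis using True k2 by (simp add: add.assoc)
  next
    case False
    then have "cnt (x + e) w < k" using Cons.prems by simp
    from Cons.IH[OF Cons.prems(1) this] show ?thesis using False by (simp add: add.assoc)
  qed
qed

lemma upper_sum: "1 \<le> k \<Longrightarrow> (\<Sum>w\<in>Wn n. wt w * (if k \<le> cnt x w then 1 else 0)) \<le> lam ^ k / (lam * s)"
proof -
  assume k: "1 \<le> k"
  have "(s / lam ^ k) * (\<Sum>w\<in>Wn n. wt w * (if k \<le> cnt x w then 1 else 0))
      = (\<Sum>w\<in>Wn n. wt w * (if k \<le> cnt x w then s / lam ^ k else 0))"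
    by (subst sum_distrib_left) (intro sum.cong refl, simp)
  also have "\<dots> \<le> (\<Sum>w\<in>Wn n. wt w * H k x w)"
    using H_hi[OF k] H_nonneg by (intro sum_mono mult_left_mono) (auto simp: wt_nonneg)
  also have "\<dots> = psi x" by (rule H_mart[OF k])
  also have "\<dots> \<le> 1 / lam" by (rule psi_le1)
  finally have "(s / lam ^ k) * (\<Sum>w\<in>Wn n. wt w * (if k \<le> cnt x w then 1 else 0)) \<le> 1 / lam" .
  then show ?thesis using s0 lam0 by (simp add: field_simps)
qed

lemma lower_sum: "1 \<le> k \<Longrightarrow> lam ^ k - 2 * r ^ n / lam \<le> (\<Sum>w\<in>Wn n. wt w * (if k \<le> cnt 0 w then 1 else 0))"
proof -
  assume k: "1 \<le> k"
  have b: "H k 0 w \<le> (if k \<le> cnt 0 w then 1 / lam ^ k else 0) + 2 * sig powr (real_of_int (0 + sum_list w)) / lam / lam ^ k" for w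
  proof (cases "k \<le> cnt 0 w")
    case True
    have "0 \<le> 2 * sig powr (real_of_int (0 + sum_list w)) / lam / lam ^ k" using lam0 by simp
    then show ?thesis using H_hi[OF k True] True by simp
  next
    case False
    then have "H k 0 w = psi (sum_list w) / lam ^ cnt 0 w" using H_lo[OF k] by simp
    also have "\<dots> \<le> psi (sum_list w) / lam ^ k"
      using psi_pos[of "sum_list w"] lam0 lam1 False
      by (intro divide_left_mono mult_pos_pos power_decreasing) (auto simp: less_imp_le)
    also have "\<dots> \<le> (2 * sig powr (sum_list w) / lam) / lam ^ k"
      using psi_le_sig lam0 by (intro divide_right_mono) auto
    finally show ?thesis using False by simp
  qed
  have "1 = (\<Sum>w\<in>Wn n. wt w * H k 0 w)" using H_mart[OF k] psi_0 by simp
  also have "\<dots> \<le> (\<Sum>w\<in>Wn n. wt w * ((if k \<le> cnt 0 w then 1 / lam ^ k else 0) + 2 * sig powr (real_of_int (0 + sum_list w)) / lam / lam ^ k))"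
    using b by (intro sum_mono mult_left_mono) (auto simp: wt_nonneg)
  also have "\<dots> = (\<Sum>w\<in>Wn n. wt w * (if k \<le> cnt 0 w then 1 else 0)) / lam ^ k
     + (2 / lam / lam ^ k) * (\<Sum>w\<in>Wn n. wt w * sig powr (real_of_int (0 + sum_list w)))"
  proof -
    have "wt w * ((if k \<le> cnt 0 w then 1 / lam ^ k else 0) + 2 * sig powr (real_of_int (0 + sum_list w)) / lam / lam ^ k)
      = wt w * (if k \<le> cnt 0 w then 1 else 0) / lam ^ k + (2 / lam / lam ^ k) * (wt w * sig powr (real_of_int (0 + sum_list w)))" for w
      by (simp add: field_simps)
    then show ?thesis by (simp only: sum.distrib sum_divide_distrib[symmetric] sum_distrib_left[symmetric])
  qed
  also have "\<dots> = (\<Sum>w\<in>Wn n. wt w * (if k \<le> cnt 0 w then 1 else 0)) / lam ^ k + (2 / lam / lam ^ k) * r ^ n"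
    using sum_sig[where x=0 and n=n] h0 by (simp add: sig_def)
  finally have "1 \<le> (\<Sum>w\<in>Wn n. wt w * (if k \<le> cnt 0 w then 1 else 0)) / lam ^ k + (2 / lam / lam ^ k) * r ^ n" .
  then have "lam ^ k \<le> (\<Sum>w\<in>Wn n. wt w * (if k \<le> cnt 0 w then 1 else 0)) + 2 * r ^ n / lam"
    using lam0 by (simp add: field_simps)
  then show ?thesis by simp
qed

end


lemma sum_Wn_append: "(\<Sum>w\<in>Wn (m + l). f w) = (\<Sum>u\<in>Wn m. \<Sum>v\<in>Wn l. f (u @ v))"
proof (induction m arbitrary: f)
  case 0 then show ?case by (simp add: Wn_0)
next
  case (Suc m)
  have "(\<Sum>w\<in>Wn (Suc m + l). f w) = (\<Sum>w\<in>Wn (m + l). f (1 # w)) + (\<Sum>w\<in>Wn (m + l). f ((-1) # w))"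
    using sum_Wn_Suc[where n="m + l"] by simp
  also have "\<dots> = (\<Sum>u\<in>Wn m. \<Sum>v\<in>Wn l. f (1 # u @ v)) + (\<Sum>u\<in>Wn m. \<Sum>v\<in>Wn l. f ((-1) # u @ v))"
    using Suc.IH[of "\<lambda>w. f (1 # w)"] Suc.IH[of "\<lambda>w. f ((-1) # w)"] by simp
  also have "\<dots> = (\<Sum>u\<in>Wn (Suc m). \<Sum>v\<in>Wn l. f (u @ v))"
    by (simp add: sum_Wn_Suc)
  finally show ?case .
qed

lemma Wn_length: "w \<in> Wn n \<Longrightarrow> length w = n" by (simp add: Wn_def)

definition blk :: "nat \<Rightarrow> nat \<Rightarrow> int list \<Rightarrow> int list" where
  "blk L b w = take L (drop (b * L) w)"

lemma blk_0: "length u = L \<Longrightarrow> blk L 0 (u @ v) = u" by (simp add: blk_def)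
lemma blk_Suc: "length u = L \<Longrightarrow> blk L (Suc b) (u @ v) = blk L b v" by (simp add: blk_def)

lemma sum_1_Suc: "(\<Sum>t\<in>{1..Suc n}. F t) = F 1 + (\<Sum>t\<in>{1..n}. F (Suc t))" for F :: "nat \<Rightarrow> 'b::comm_monoid_add"
proof -
  have "(\<Sum>t\<in>{1..Suc n}. F t) = F 1 + (\<Sum>t\<in>{Suc 1..Suc n}. F t)"
    by (rule sum.atLeast_Suc_atMost) simp
  also have "(\<Sum>t\<in>{Suc 1..Suc n}. F t) = (\<Sum>t\<in>{1..n}. F (Suc t))"
    by (rule sum.shift_bounds_cl_Suc_ivl)
  finally show ?thesis .
qed

context rw begin

lemma wt_append: "wt (u @ v) = wt u * wt v" by (simp add: wt_def)

lemma sum_blocks: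
  "(\<Sum>w\<in>Wn (B * L). wt w * (\<Prod>b<B. f (blk L b w))) = (\<Sum>u\<in>Wn L. wt u * f u) ^ B"
proof (induction B)
  case 0 then show ?case by (simp add: Wn_0 wt_Nil)
next
  case (Suc B)
  have "(\<Sum>w\<in>Wn (Suc B * L). wt w * (\<Prod>b<Suc B. f (blk L b w)))
      = (\<Sum>u\<in>Wn L. \<Sum>v\<in>Wn (B * L). wt (u @ v) * (\<Prod>b<Suc B. f (blk L b (u @ v))))"
    using sum_Wn_append[where m=L and l="B * L"] by (simp add: add.commute)
  also have "\<dots> = (\<Sum>u\<in>Wn L. \<Sum>v\<in>Wn (B * L). (wt u * f u) * (wt v * (\<Prod>b<B. f (blk L b v))))"
    by (intro sum.cong refl) (simp only: wt_append prod.lessThan_Suc_shift, simp add: blk_0 blk_Suc Wn_length)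
  also have "\<dots> = (\<Sum>u\<in>Wn L. wt u * f u) * (\<Sum>v\<in>Wn (B * L). wt v * (\<Prod>b<B. f (blk L b v)))"
    by (simp add: sum_product)
  finally show ?case using Suc.IH by simp
qed

lemma cnt_sum: "cnt x w = (\<Sum>t\<in>{1..length w}. if x + sum_list (take t w) \<in> {0, z} then 1 else 0)"
proof (induction w arbitrary: x)
  case Nil then show ?case by simp
next
  case (Cons e w)
  have "(\<Sum>t\<in>{1..length (e # w)}. if x + sum_list (take t (e # w)) \<in> {0, z} then 1 else (0::nat))
      = (if x + e \<in> {0, z} then 1 else 0) + (\<Sum>t\<in>{1..length w}. if x + e + sum_list (take t w) \<in> {0, z} then 1 else 0)"
    by (simp only: length_Cons sum_1_Suc, simp add: add.assoc)
  then show ?case using Cons.IH[of "x + e"] by simp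
qed

end


locale rwp = rw p q z + prob_space M
  for p q :: real and z :: int and M :: "'a measure" +
  fixes X :: "nat \<Rightarrow> 'a \<Rightarrow> int"
  assumes indep: "indep_vars (\<lambda>_. count_space UNIV) X UNIV"
    and P1: "\<And>i. prob {\<omega> \<in> space M. X i \<omega> = 1} = p"
    and Pm: "\<And>i. prob {\<omega> \<in> space M. X i \<omega> = -1} = q"
begin

lemma X_meas[measurable]: "X i \<in> measurable M (count_space UNIV)"
  using indep by (simp add: indep_vars_def)

lemma X_set[measurable]: "{\<omega> \<in> space M. X i \<omega> = c} \<in> sets M"
proof -
  have "{\<omega> \<in> space M. X i \<omega> = c} = X i -` {c} \<inter> space M" by auto
  then show ?thesis using measurable_sets[OF X_meas, of "{c}" i] by simp
qed

lemma AE_pm1: "AE \<omega> in M. X i \<omega> \<in> {1, -1}"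
proof -
  have "prob ({\<omega> \<in> space M. X i \<omega> = 1} \<union> {\<omega> \<in> space M. X i \<omega> = -1})
      = prob {\<omega> \<in> space M. X i \<omega> = 1} + prob {\<omega> \<in> space M. X i \<omega> = -1}"
    by (rule finite_measure_Union) auto
  then have "prob ({\<omega> \<in> space M. X i \<omega> = 1} \<union> {\<omega> \<in> space M. X i \<omega> = -1}) = 1"
    using P1 Pm pq1 by simp
  then have "AE \<omega> in M. \<omega> \<in> {\<omega> \<in> space M. X i \<omega> = 1} \<union> {\<omega> \<in> space M. X i \<omega> = -1}"
    by (rule AE_prob_1)
  then show ?thesis by eventually_elim auto
qed

lemma AE_pm: "AE \<omega> in M. \<forall>i. X i \<omega> \<in> {1, -1}"
  using AE_pm1 by (simp add: AE_all_countable)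

definition path :: "nat \<Rightarrow> 'a \<Rightarrow> int list" where
  "path n \<omega> = map (\<lambda>i. X i \<omega>) [0..<n]"

definition cyl :: "int list \<Rightarrow> 'a set" where
  "cyl w = {\<omega> \<in> space M. \<forall>i<length w. X i \<omega> = w ! i}"

lemma cyl_sets[measurable]: "cyl w \<in> sets M"
proof (cases "length w = 0")
  case True then show ?thesis by (simp add: cyl_def)
next
  case False
  have "cyl w = {\<omega> \<in> space M. \<forall>i\<in>{..<length w}. X i \<omega> = w ! i}"
    by (auto simp: cyl_def)
  also have "\<dots> \<in> sets M" using False by (intro sets.sets_Collect_finite_All') auto
  finally show ?thesis .
qed

lemma prob_cyl: "w \<in> Wn n \<Longrightarrow> prob (cyl w) = wt w"
proof -
  assume w: "w \<in> Wn n"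
  show ?thesis
  proof (cases "length w = 0")
    case True
    then show ?thesis by (simp add: cyl_def wt_def prob_space)
  next
    case False
    have "prob (\<Inter>i\<in>{..<length w}. X i -` {w ! i} \<inter> space M)
        = (\<Prod>i\<in>{..<length w}. prob (X i -` {w ! i} \<inter> space M))"
      using False by (intro indep_varsD[OF indep]) auto
    moreover have "(\<Inter>i\<in>{..<length w}. X i -` {w ! i} \<inter> space M) = cyl w"
      using False by (auto simp: cyl_def)
    moreover have "prob (X i -` {w ! i} \<inter> space M) = (if w ! i = 1 then p else q)" if "i < length w" for i
    proof -
      have "w ! i \<in> {-1, 1}" using w nth_mem[OF that] by (auto simp: Wn_def)
      moreover have "X i -` {c} \<inter> space M = {\<omega> \<in> space M. X i \<omega> = c}" for c by auto
      ultimately show ?thesis using P1 Pm by auto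
    qed
    ultimately have "prob (cyl w) = (\<Prod>i\<in>{..<length w}. (if w ! i = 1 then p else q))" by simp
    also have "\<dots> = wt w" unfolding wt_def
      by (simp add: prod.list_conv_set_nth atLeast0LessThan)
    finally show ?thesis .
  qed
qed

lemma path_meas[measurable]: "path n \<in> measurable M (count_space UNIV)"
proof (subst measurable_count_space_eq_countable)
  show "countable (UNIV :: int list set)" by simp
  show "path n \<in> space M \<rightarrow> UNIV \<and> (\<forall>a\<in>UNIV. path n -` {a} \<inter> space M \<in> sets M)"
  proof (intro conjI ballI)
    fix a :: "int list"
    have "path n -` {a} \<inter> space M = (if length a = n then cyl a else {})"
    proof (cases "length a = n")
      case True
      have "map (\<lambda>i. X i \<omega>) [0..<n] = a \<longleftrightarrow> (\<forall>i<n. X i \<omega> = a ! i)" for \<omega>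
        using True by (auto simp: list_eq_iff_nth_eq)
      then show ?thesis using True by (auto simp: path_def cyl_def)
    qed (auto simp: path_def)
    then show "path n -` {a} \<inter> space M \<in> sets M" by simp
  qed simp
qed

lemma prob_path: "prob {\<omega> \<in> space M. P (path n \<omega>)} = (\<Sum>w\<in>Wn n. wt w * (if P w then 1 else 0))"
proof -
  let ?E = "{\<omega> \<in> space M. P (path n \<omega>)}"
  let ?W = "{w \<in> Wn n. P w}"
  let ?U = "\<Union>w\<in>?W. cyl w"
  have E: "?E \<in> sets M"
  proof -
    have "?E = path n -` {w. P w} \<inter> space M" by auto
    then show ?thesis using measurable_sets[OF path_meas, of "{w. P w}"] by simp
  qed
  have finW: "finite ?W" using finite_Wn by simp
  have U: "?U \<in> sets M" using finW by (intro sets.finite_UN) auto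
  have "AE \<omega> in M. \<omega> \<in> ?E \<longleftrightarrow> \<omega> \<in> ?U"
    using AE_pm
  proof eventually_elim
    case (elim \<omega>)
    show ?case
    proof
      assume "\<omega> \<in> ?E"
      moreover have "path n \<omega> \<in> Wn n" using elim by (auto simp: Wn_def path_def)
      moreover have "\<omega> \<in> cyl (path n \<omega>)" using \<open>\<omega> \<in> ?E\<close> by (auto simp: cyl_def path_def)
      ultimately show "\<omega> \<in> ?U" by auto
    next
      assume "\<omega> \<in> ?U"
      then obtain w where "w \<in> Wn n" "P w" "\<omega> \<in> cyl w" by auto
      moreover have "path n \<omega> = w" using \<open>w \<in> Wn n\<close> \<open>\<omega> \<in> cyl w\<close>
        by (auto simp: cyl_def path_def Wn_def intro!: nth_equalityI)
      ultimately show "\<omega> \<in> ?E" by (auto simp: cyl_def)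
    qed
  qed
  then have "prob ?E = prob ?U" using E U by (rule measure_eq_AE)
  also have "\<dots> = (\<Sum>w\<in>?W. prob (cyl w))"
  proof (rule measure_finite_Union)
    show "disjoint_family_on cyl ?W"
      unfolding disjoint_family_on_def
    proof (intro ballI impI)
      fix w w' assume "w \<in> ?W" "w' \<in> ?W" "w \<noteq> w'"
      then have "length w = n" "length w' = n" by (auto simp: Wn_def)
      then show "cyl w \<inter> cyl w' = {}" using \<open>w \<noteq> w'\<close>
        by (auto simp: cyl_def intro: nth_equalityI)
    qed
  qed (use finW in auto)
  also have "\<dots> = (\<Sum>w\<in>?W. wt w)" by (intro sum.cong) (auto simp: prob_cyl)
  also have "\<dots> = (\<Sum>w\<in>Wn n. wt w * (if P w then 1 else 0))"
    using finite_Wn by (simp add: sum.inter_filter if_distrib cong: if_cong)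
  finally show ?thesis .
qed

end


context rwp begin

lemma S_diff: "rw_S X (m + t) \<omega> - rw_S X m \<omega> = (\<Sum>i<t. X (m + i) \<omega>)"
  by (induction t) (auto simp: rw_S_def)

lemma sum_take_map: "t \<le> L \<Longrightarrow> sum_list (take t (map f [0..<L])) = (\<Sum>i<t. f i)"
  by (simp add: take_map sum_set_upt_conv_sum_list_nat[symmetric] atLeast0LessThan min_def)

lemma cnt_map: "cnt x (map (\<lambda>i. X (m + i) \<omega>) [0..<L])
   = (\<Sum>t\<in>{1..L}. if x + (rw_S X (m + t) \<omega> - rw_S X m \<omega>) \<in> {0, z} then 1 else 0)"
  unfolding cnt_sum by (intro sum.cong) (auto simp: sum_take_map S_diff)

lemma card_filter_sum: "finite A \<Longrightarrow> card {x \<in> A. P x} = (\<Sum>x\<in>A. if P x then 1 else 0)"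
  by (simp add: sum.inter_filter[symmetric])

lemma xi_sum: "rw_xi X c n \<omega> = (\<Sum>t\<in>{1..n}. if rw_S X t \<omega> = c then 1 else 0)"
  unfolding rw_xi_def by (rule card_filter_sum) simp

lemma Xi_eq: "rw_Xi X ((\<lambda>x. x + a) ` {0, z}) n \<omega>
    = (\<Sum>t\<in>{1..n}. if - a + rw_S X t \<omega> \<in> {0, z} then 1 else 0)"
proof -
  have im: "(\<lambda>x. x + a) ` {0, z} = {a, z + a}" by auto
  have ne: "a \<noteq> z + a" using z0 by simp
  have "rw_Xi X ((\<lambda>x. x + a) ` {0, z}) n \<omega> = rw_xi X a n \<omega> + rw_xi X (z + a) n \<omega>"
    unfolding rw_Xi_def im using ne by simp
  also have "\<dots> = (\<Sum>t\<in>{1..n}. (if rw_S X t \<omega> = a then 1 else 0) + (if rw_S X t \<omega> = z + a then 1 else 0))"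
    by (simp only: xi_sum sum.distrib)
  also have "\<dots> = (\<Sum>t\<in>{1..n}. if - a + rw_S X t \<omega> \<in> {0, z} then 1 else 0)"
    using ne by (intro sum.cong) auto
  finally show ?thesis .
qed

lemma Xi_path: "rw_Xi X ((\<lambda>x. x + a) ` {0, z}) n \<omega> = cnt (- a) (path n \<omega>)"
proof -
  have "path n \<omega> = map (\<lambda>i. X (0 + i) \<omega>) [0..<n]" by (simp add: path_def)
  then have "cnt (- a) (path n \<omega>) = (\<Sum>t\<in>{1..n}. if - a + (rw_S X (0 + t) \<omega> - rw_S X 0 \<omega>) \<in> {0, z} then 1 else 0)"
    by (simp only: cnt_map)
  also have "\<dots> = rw_Xi X ((\<lambda>x. x + a) ` {0, z}) n \<omega>"
    unfolding Xi_eq by (simp only: add_0 rw_S_def lessThan_0 sum.empty diff_zero)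
  finally show ?thesis by simp
qed

lemma Xi_le_n: "rw_Xi X ((\<lambda>x. x + a) ` {0, z}) n \<omega> \<le> n"
proof -
  have "rw_Xi X ((\<lambda>x. x + a) ` {0, z}) n \<omega> \<le> (\<Sum>t\<in>{1..n}. (1::nat))"
    unfolding Xi_eq by (intro sum_mono) auto
  then show ?thesis by simp
qed

lemma bdd_Xi: "bdd_above (range (\<lambda>a. rw_Xi X ((\<lambda>x. x + a) ` {0, z}) n \<omega>))"
  using Xi_le_n by (intro bdd_aboveI) auto

lemma Xi_le_star: "rw_Xi X ((\<lambda>x. x + a) ` {0, z}) n \<omega> \<le> rw_Xi_star X {0, z} n \<omega>"
  unfolding rw_Xi_star_def by (rule cSup_upper[OF _ bdd_Xi]) auto

lemma star_ge: "1 \<le> k \<Longrightarrow> k \<le> rw_Xi_star X {0, z} n \<omega> \<Longrightarrow> \<exists>a. k \<le> rw_Xi X ((\<lambda>x. x + a) ` {0, z}) n \<omega>"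
proof (rule ccontr)
  assume k: "1 \<le> k" "k \<le> rw_Xi_star X {0, z} n \<omega>" and "\<not> (\<exists>a. k \<le> rw_Xi X ((\<lambda>x. x + a) ` {0, z}) n \<omega>)"
  then have "\<forall>a. rw_Xi X ((\<lambda>x. x + a) ` {0, z}) n \<omega> \<le> k - 1"
    by (metis Suc_pred' k(1) less_Suc_eq_le not_le_imp_less order_less_le_trans zero_less_one)
  then have "rw_Xi_star X {0, z} n \<omega> \<le> k - 1"
    unfolding rw_Xi_star_def by (intro cSup_least) auto
  then show False using k by simp
qed

lemma star_mono: "n \<le> n' \<Longrightarrow> rw_Xi_star X {0, z} n \<omega> \<le> rw_Xi_star X {0, z} n' \<omega>"
proof -
  assume nn: "n \<le> n'"
  have "rw_Xi X ((\<lambda>x. x + a) ` {0, z}) n \<omega> \<le> rw_Xi X ((\<lambda>x. x + a) ` {0, z}) n' \<omega>" for a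
    unfolding Xi_eq using nn by (intro sum_mono2) auto
  then have "rw_Xi X ((\<lambda>x. x + a) ` {0, z}) n \<omega> \<le> rw_Xi_star X {0, z} n' \<omega>" for a
    using Xi_le_star[of a n' \<omega>] order_trans by blast
  then show ?thesis
    unfolding rw_Xi_star_def[of X "{0, z}" n] by (intro cSup_least) auto
qed

lemma S_bound: "\<forall>i. X i \<omega> \<in> {1, -1} \<Longrightarrow> \<bar>rw_S X t \<omega>\<bar> \<le> int t"
proof (induction t)
  case 0 then show ?case by (simp add: rw_S_def)
next
  case (Suc t)
  have "rw_S X (Suc t) \<omega> = rw_S X t \<omega> + X t \<omega>" by (simp add: rw_S_def)
  moreover have "\<bar>X t \<omega>\<bar> = 1" using Suc.prems[rule_format, of t] by auto
  ultimately show ?case using Suc by simp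
qed

lemma upper_event:
  assumes good: "\<forall>i. X i \<omega> \<in> {1, -1}" and k: "1 \<le> k" "k \<le> rw_Xi_star X {0, z} n \<omega>"
  shows "\<exists>a\<in>{- int n - z .. int n}. k \<le> cnt (- a) (path n \<omega>)"
proof -
  obtain a where a: "k \<le> rw_Xi X ((\<lambda>x. x + a) ` {0, z}) n \<omega>" using star_ge[OF k] by blast
  then have "0 < (\<Sum>t\<in>{1..n}. if - a + rw_S X t \<omega> \<in> {0, z} then 1 else (0::nat))"
    using k unfolding Xi_eq by simp
  have "\<exists>t\<in>{1..n}. - a + rw_S X t \<omega> \<in> {0, z}"
  proof (rule ccontr)
    assume "\<not> ?thesis"
    then have "(\<Sum>t\<in>{1..n}. if - a + rw_S X t \<omega> \<in> {0, z} then 1 else (0::nat)) = 0"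
      by (intro sum.neutral) auto
    then show False using \<open>0 < _\<close> by simp
  qed
  then obtain t where t: "t \<in> {1..n}" "- a + rw_S X t \<omega> \<in> {0, z}" by blast
  have "\<bar>rw_S X t \<omega>\<bar> \<le> int n" using S_bound[OF good, of t] t by simp
  then have "a \<in> {- int n - z .. int n}" using t z0 by auto
  then show ?thesis using a Xi_path by metis
qed

lemma blk_path: "b < B \<Longrightarrow> blk L b (path (B * L) \<omega>) = map (\<lambda>i. X (b * L + i) \<omega>) [0..<L]"
proof -
  assume b: "b < B"
  then have le: "b * L + L \<le> B * L"
    by (metis add.commute mult_Suc mult_le_mono1 Suc_leI)
  show ?thesis
    unfolding blk_def path_def using le
    by (simp add: drop_map take_map map_add_upt[symmetric] map_map comp_def add.commute)
qed

lemma block_event: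
  assumes b: "b < B" and n: "B * L \<le> n"
  shows "cnt 0 (blk L b (path (B * L) \<omega>)) \<le> rw_Xi_star X {0, z} n \<omega>"
proof -
  define a where "a = rw_S X (b * L) \<omega>"
  define f where "f t = (if - a + rw_S X t \<omega> \<in> {0, z} then 1 else (0::nat))" for t
  have le: "b * L + L \<le> n" using b n
    by (metis add.commute mult_Suc mult_le_mono1 Suc_leI order_trans)
  have "cnt 0 (blk L b (path (B * L) \<omega>)) = (\<Sum>t\<in>{1..L}. f (b * L + t))"
    unfolding blk_path[OF b] cnt_map f_def a_def by (intro sum.cong) auto
  also have "\<dots> = (\<Sum>u\<in>(\<lambda>t. b * L + t) ` {1..L}. f u)"
  proof -
    have inj: "inj_on (\<lambda>t. b * L + t) {1..L}" by (simp add: inj_on_def)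
    show ?thesis by (simp only: sum.reindex[OF inj] comp_def)
  qed
  also have "\<dots> \<le> (\<Sum>u\<in>{1..n}. f u)" using le by (intro sum_mono2) auto
  also have "\<dots> = rw_Xi X ((\<lambda>x. x + a) ` {0, z}) n \<omega>" unfolding Xi_eq f_def ..
  also have "\<dots> \<le> rw_Xi_star X {0, z} n \<omega>" by (rule Xi_le_star)
  finally show ?thesis .
qed

end


lemma ln_le_powr: "0 < a \<Longrightarrow> 1 \<le> x \<Longrightarrow> ln x \<le> x powr a / (a::real)"
proof -
  assume a: "0 < a" and x: "1 \<le> x"
  have "ln (x powr a) \<le> x powr a - 1" using x by (intro ln_le_minus_one) simp
  then have "a * ln x \<le> x powr a" using x by (simp add: ln_powr)
  then show ?thesis using a by (simp add: pos_le_divide_eq mult.commute)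
qed

lemma summable_exp_powr:
  fixes c a :: real
  assumes c: "0 < c" and a: "0 < a"
  shows "summable (\<lambda>n::nat. exp (-(c * real n powr a)))"
proof -
  define M where "M = nat \<lceil>2 / a\<rceil>"
  have M2: "2 / a \<le> real M" unfolding M_def by linarith
  then have M0: "0 < M" using a
    by (metis divide_pos_pos of_nat_0_less_iff order_less_le_trans zero_less_numeral)
  have aM: "2 \<le> a * real M" using M2 a by (simp add: field_simps)
  define K where "K = (real M / c) ^ M"
  have K0: "0 < K" using c M0 by (simp add: K_def)
  have bound: "norm (exp (-(c * real n powr a))) \<le> K * inverse (real n ^ 2)" if n: "n \<ge> 1" for n
  proof -
    define x where "x = c * real n powr a"
    have x0: "0 \<le> x" using c by (simp add: x_def)
    have "(x / real M) ^ M \<le> (1 + x / real M) ^ M"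
      using x0 by (intro power_mono) auto
    also have "\<dots> \<le> exp x" using x0 M0 by (intro exp_ge_one_plus_x_over_n_power_n) auto
    finally have e1: "(x / real M) ^ M \<le> exp x" .
    have "(x / real M) ^ M = (c / real M) ^ M * (real n powr a) ^ M"
      by (simp add: x_def power_mult_distrib power_divide)
    also have "(real n powr a) ^ M = real n powr (a * real M)"
      using n by (simp add: powr_powr powr_realpow[symmetric])
    also have "\<dots> \<ge> real n powr 2" using n aM by (intro powr_mono) auto
    then have "(c / real M) ^ M * real n powr (a * real M) \<ge> (c / real M) ^ M * real n ^ 2"
    proof -
      have "real n powr 2 = real n ^ 2" using n by (simp add: powr_numeral)
      then show ?thesis using \<open>real n powr (a * real M) \<ge> real n powr 2\<close> c M0
        by (intro mult_left_mono) auto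
    qed
    finally have "(c / real M) ^ M * real n ^ 2 \<le> exp x" using e1 by linarith
    then have "exp (- x) \<le> 1 / ((c / real M) ^ M * real n ^ 2)"
      using n c M0 by (simp add: exp_minus field_simps)
    also have "\<dots> = K * inverse (real n ^ 2)" by (simp add: K_def power_divide field_simps)
    finally show ?thesis by (simp add: x_def)
  qed
  have "summable (\<lambda>n. K * inverse (real n ^ 2))"
    by (intro summable_mult inverse_power_summable) auto
  then show ?thesis using bound by (rule summable_comparison_test'[where N=1])
qed


context rw begin
definition "kap = - 1 / ln lam"
lemma ln_lam: "ln lam < 0" using lam0 lam1 by simp
lemma kap0: "0 < kap" using ln_lam by (simp add: kap_def)
lemma lam_powr_kap: "lam powr (kap * t) = exp (- t)"
  using lam0 ln_lam by (simp add: powr_def kap_def)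
lemma lam_pow_le: "y \<le> real k \<Longrightarrow> lam ^ k \<le> lam powr y"
  using lam0 lam1 powr_mono'[of y "real k" lam] by (simp add: powr_realpow)
lemma lam_pow_ge: "real k \<le> y \<Longrightarrow> lam powr y \<le> lam ^ k"
  using lam0 lam1 powr_mono'[of "real k" y lam] by (simp add: powr_realpow)
end

lemma ind_ex_le_sum: "finite I \<Longrightarrow> (if \<exists>a\<in>I. P a then 1 else 0) \<le> (\<Sum>a\<in>I. if P a then 1 else (0::real))"
proof -
  assume fin: "finite I"
  show ?thesis
  proof (cases "\<exists>a\<in>I. P a")
    case True
    then obtain a where "a \<in> I" "P a" by blast
    then have "(if P a then 1 else 0) \<le> (\<Sum>a\<in>I. if P a then 1 else (0::real))"
      using fin by (intro member_le_sum) auto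
    then show ?thesis using True \<open>P a\<close> by simp
  qed (simp add: sum_nonneg)
qed

context rwp begin

definition kU :: "real \<Rightarrow> nat \<Rightarrow> nat" where
  "kU e j = nat \<lceil>(1 + e) * kap * (real j * ln 2)\<rceil> + 1"

definition AU :: "real \<Rightarrow> nat \<Rightarrow> 'a set" where
  "AU e j = {\<omega> \<in> space M. \<exists>a\<in>{- int (2 ^ j) - z .. int (2 ^ j)}. kU e j \<le> cnt (- a) (path (2 ^ j) \<omega>)}"

lemma AU_sets: "AU e j \<in> sets M"
proof -
  have "AU e j = {\<omega> \<in> space M. (\<lambda>w. \<exists>a\<in>{- int (2 ^ j) - z .. int (2 ^ j)}. kU e j \<le> cnt (- a) w) (path (2 ^ j) \<omega>)}"
    by (simp add: AU_def)
  also have "\<dots> \<in> sets M"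
  proof -
    have "{\<omega> \<in> space M. (\<lambda>w. \<exists>a\<in>{- int (2 ^ j) - z .. int (2 ^ j)}. kU e j \<le> cnt (- a) w) (path (2 ^ j) \<omega>)}
      = path (2 ^ j) -` {w. \<exists>a\<in>{- int (2 ^ j) - z .. int (2 ^ j)}. kU e j \<le> cnt (- a) w} \<inter> space M" by auto
    then show ?thesis using measurable_sets[OF path_meas] by simp
  qed
  finally show ?thesis .
qed

lemma prob_AU: "prob (AU e j) \<le> real (nat (2 * 2 ^ j + z + 1)) * (lam ^ kU e j / (lam * s))"
proof -
  let ?I = "{- int (2 ^ j) - z .. int (2 ^ j)}"
  let ?n = "2 ^ j :: nat"
  have "prob (AU e j) = (\<Sum>w\<in>Wn ?n. wt w * (if \<exists>a\<in>?I. kU e j \<le> cnt (- a) w then 1 else 0))"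
    unfolding AU_def by (rule prob_path)
  also have "\<dots> \<le> (\<Sum>w\<in>Wn ?n. wt w * (\<Sum>a\<in>?I. if kU e j \<le> cnt (- a) w then 1 else 0))"
    by (intro sum_mono mult_left_mono ind_ex_le_sum) (auto simp: wt_nonneg)
  also have "\<dots> = (\<Sum>a\<in>?I. \<Sum>w\<in>Wn ?n. wt w * (if kU e j \<le> cnt (- a) w then 1 else 0))"
    by (simp add: sum_distrib_left sum.swap[of _ "Wn ?n"])
  also have "\<dots> \<le> (\<Sum>a\<in>?I. lam ^ kU e j / (lam * s))"
    by (intro sum_mono upper_sum) (simp add: kU_def)
  also have "\<dots> = real (nat (2 * 2 ^ j + z + 1)) * (lam ^ kU e j / (lam * s))"
    by simp
  finally show ?thesis .
qed


lemma prob_AU_geo: "0 < e \<Longrightarrow> prob (AU e j) \<le> ((3 + real_of_int z) / (lam * s)) * exp (- e * ln 2) ^ j"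
proof -
  assume e: "0 < e"
  have c1: "real (nat (2 * 2 ^ j + z + 1)) \<le> (3 + real_of_int z) * 2 ^ j"
  proof -
    have "real (nat (2 * 2 ^ j + z + 1)) = 2 * 2 ^ j + real_of_int z + 1" using z0 by simp
    moreover have "real_of_int z + 1 \<le> (1 + real_of_int z) * 2 ^ j"
    proof -
      have "(1::real) \<le> 2 ^ j" by (simp add: one_le_power)
      then have "(1 + real_of_int z) * 1 \<le> (1 + real_of_int z) * 2 ^ j"
        using z0 by (intro mult_left_mono) auto
      then show ?thesis by simp
    qed
    ultimately show ?thesis by (simp add: algebra_simps)
  qed
  have c2: "lam ^ kU e j \<le> exp (- ((1 + e) * (real j * ln 2)))"
  proof -
    have "lam ^ kU e j \<le> lam powr (kap * ((1 + e) * (real j * ln 2)))"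
    proof (rule lam_pow_le)
      have "kap * ((1 + e) * (real j * ln 2)) \<le> real (nat \<lceil>(1 + e) * kap * (real j * ln 2)\<rceil>)"
        by (simp add: algebra_simps) linarith
      then show "kap * ((1 + e) * (real j * ln 2)) \<le> real (kU e j)" unfolding kU_def by simp
    qed
    then show ?thesis by (simp add: lam_powr_kap)
  qed
  have c3: "(2::real) ^ j * exp (- ((1 + e) * (real j * ln 2))) = exp (- e * ln 2) ^ j"
  proof -
    have "(2::real) ^ j = exp (real j * ln 2)" by (simp add: exp_of_nat_mult)
    then have "(2::real) ^ j * exp (- ((1 + e) * (real j * ln 2))) = exp (real j * (- e * ln 2))"
      by (simp add: exp_add[symmetric] algebra_simps)
    moreover have "exp (real j * (- e * ln 2)) = exp (- e * ln 2) ^ j" by (rule exp_of_nat_mult)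
    ultimately show ?thesis by simp
  qed
  have ls: "0 < lam * s" using lam0 s0 by simp
  have "prob (AU e j) \<le> real (nat (2 * 2 ^ j + z + 1)) * (lam ^ kU e j / (lam * s))" by (rule prob_AU)
  also have "\<dots> \<le> ((3 + real_of_int z) * 2 ^ j) * (exp (- ((1 + e) * (real j * ln 2))) / (lam * s))"
    using c1 c2 ls lam0 by (intro mult_mono divide_right_mono) auto
  also have "\<dots> = ((3 + real_of_int z) / (lam * s)) * ((2::real) ^ j * exp (- ((1 + e) * (real j * ln 2))))"
    by (simp add: field_simps)
  also have "\<dots> = ((3 + real_of_int z) / (lam * s)) * exp (- e * ln 2) ^ j" by (simp only: c3)
  finally show ?thesis .
qed

lemma AE_AU: "0 < e \<Longrightarrow> AE \<omega> in M. eventually (\<lambda>j. \<omega> \<in> space M - AU e j) sequentially"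
proof -
  assume e: "0 < e"
  have "summable (\<lambda>j. ((3 + real_of_int z) / (lam * s)) * exp (- e * ln 2) ^ j)"
    using e by (intro summable_mult summable_geometric) simp
  then have "summable (\<lambda>j. measure M (AU e j))"
    by (rule summable_comparison_test') (use prob_AU_geo[OF e] in auto)
  then show ?thesis by (intro borel_cantelli_AE1 AU_sets) (auto simp: less_top[symmetric])
qed

lemma UB:
  assumes e: "0 < e"
  shows "AE \<omega> in M. eventually (\<lambda>n. real (rw_Xi_star X {0, z} n \<omega>) / ln (real n)
            \<le> (1 + e) * kap + ((1 + e) * kap * ln 2 + 1) / ln (real n)) sequentially"
  using AE_AU[OF e] AE_pm
proof eventually_elim
  case (elim \<omega>)
  from elim(1) obtain J where J: "\<And>j. j \<ge> J \<Longrightarrow> \<omega> \<in> space M - AU e j"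
    by (auto simp: eventually_sequentially)
  have bnd: "real (rw_Xi_star X {0, z} (2 ^ j) \<omega>) \<le> (1 + e) * kap * (real j * ln 2) + 1" if j: "j \<ge> J" for j
  proof -
    have "rw_Xi_star X {0, z} (2 ^ j) \<omega> < kU e j"
    proof (rule ccontr)
      assume "\<not> ?thesis"
      then have "kU e j \<le> rw_Xi_star X {0, z} (2 ^ j) \<omega>" by simp
      then have "\<exists>a\<in>{- int (2 ^ j) - z .. int (2 ^ j)}. kU e j \<le> cnt (- a) (path (2 ^ j) \<omega>)"
        using elim(2) by (intro upper_event) (auto simp: kU_def)
      then have "\<omega> \<in> AU e j" using J[OF j] by (auto simp: AU_def)
      then show False using J[OF j] by simp
    qed
    then have "real (rw_Xi_star X {0, z} (2 ^ j) \<omega>) \<le> real (nat \<lceil>(1 + e) * kap * (real j * ln 2)\<rceil>)"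
      unfolding kU_def by linarith
    also have "\<dots> \<le> (1 + e) * kap * (real j * ln 2) + 1"
    proof -
      have "0 \<le> (1 + e) * kap * (real j * ln 2)" using e kap0 by simp
      then show ?thesis by linarith
    qed
    finally show ?thesis .
  qed
  show ?case
    unfolding eventually_sequentially
  proof (intro exI[of _ "max 2 (2 ^ J)"] allI impI)
    fix n :: nat assume n: "max 2 (2 ^ J) \<le> n"
    define j where "j = nat \<lceil>log 2 (real n)\<rceil>"
    have n2: "2 \<le> real n" using n by simp
    have lnpos: "0 < ln (real n)" using n2 by simp
    have lg: "real J \<le> log 2 (real n)"
    proof -
      have "(2::real) ^ J \<le> real n" using n by (simp flip: of_nat_power)
      then have "log 2 (2 ^ J) \<le> log 2 (real n)" using n2 by (subst log_le_cancel_iff) auto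
      then show ?thesis by (simp add: log_nat_power)
    qed
    have jJ: "J \<le> j" unfolding j_def using lg by linarith
    have nj: "n \<le> 2 ^ j"
    proof -
      have "real n = 2 powr (log 2 (real n))" using n2 by simp
      also have "\<dots> \<le> 2 powr (real j)" unfolding j_def by (intro powr_mono) linarith+
      also have "\<dots> = 2 ^ j" by (simp add: powr_realpow)
      finally have "real n \<le> 2 ^ j" .
      then show ?thesis by (simp flip: of_nat_power)
    qed
    have jle: "real j \<le> log 2 (real n) + 1" unfolding j_def using lg by linarith
    have "real (rw_Xi_star X {0, z} n \<omega>) \<le> real (rw_Xi_star X {0, z} (2 ^ j) \<omega>)"
      using star_mono[OF nj] by simp
    also have "\<dots> \<le> (1 + e) * kap * (real j * ln 2) + 1" by (rule bnd[OF jJ])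
    also have "\<dots> \<le> (1 + e) * kap * ((log 2 (real n) + 1) * ln 2) + 1"
      using jle e kap0 by (intro add_right_mono mult_left_mono mult_right_mono) auto
    also have "\<dots> = (1 + e) * kap * ln (real n) + ((1 + e) * kap * ln 2 + 1)"
      using n2 by (simp add: log_def algebra_simps)
    finally have "real (rw_Xi_star X {0, z} n \<omega>) \<le> (1 + e) * kap * ln (real n) + ((1 + e) * kap * ln 2 + 1)" .
    then show "real (rw_Xi_star X {0, z} n \<omega>) / ln (real n) \<le> (1 + e) * kap + ((1 + e) * kap * ln 2 + 1) / ln (real n)"
      using lnpos by (simp add: field_simps)
  qed
qed

end


lemma prod_if01: "(\<Prod>b<(B::nat). if P b then 1 else (0::real)) = (if \<forall>b<B. P b then 1 else 0)"
  by (induction B) (auto simp: less_Suc_eq)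

lemma div_lower: "0 < L \<Longrightarrow> real n / real L - 1 \<le> real (n div L)"
proof -
  assume L: "0 < L"
  have "n = n div L * L + n mod L" by simp
  moreover have "n mod L < L" using L by simp
  ultimately have "real n < (real (n div L) + 1) * real L"
    by (metis (no_types, lifting) add.commute add_less_cancel_left distrib_right mult_1
          of_nat_add of_nat_less_iff of_nat_mult)
  then show ?thesis using L by (simp add: field_simps)
qed

context rw begin
lemma r0: "0 < r" using p0 q0 by (simp add: r_def)
lemma r1: "r < 1"
proof -
  have "r * r = 4 * (p * q)" using p0 q0 by (simp add: r_def)
  also have "\<dots> = (p + q)^2 - (p - q)^2" by (simp add: power2_eq_square algebra_simps)
  also have "\<dots> < 1" using qp pq1 by simp
  finally have "r * r < 1" .
  then show ?thesis using r0 by (metis less_1_mult linorder_not_le mult_le_cancel_left1 not_less_iff_gr_or_eq)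
qed

lemma r_small: "0 < c \<Longrightarrow> \<exists>m\<ge>1. r ^ m \<le> c"
proof -
  assume c: "0 < c"
  have "(\<lambda>n. r ^ n) \<longlonglongrightarrow> 0" using r0 r1 by (intro LIMSEQ_power_zero) simp
  then have "eventually (\<lambda>n. r ^ n < c) sequentially" using c by (rule order_tendstoD)
  then obtain N where N: "\<And>n. n \<ge> N \<Longrightarrow> r ^ n < c" by (auto simp: eventually_sequentially)
  have "r ^ (N + 1) \<le> c" using N[of "N + 1"] by simp
  then show ?thesis by (intro exI[of _ "N + 1"]) auto
qed
end

context rwp begin

definition kL :: "real \<Rightarrow> nat \<Rightarrow> nat" where
  "kL e n = nat \<lfloor>(1 - e) * kap * ln (real n)\<rfloor> + 1"
definition LL :: "nat \<Rightarrow> nat \<Rightarrow> real \<Rightarrow> nat \<Rightarrow> nat" where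
  "LL c0 c1 e n = c0 * (kL e n + 1) + c1"
definition BB :: "nat \<Rightarrow> nat \<Rightarrow> real \<Rightarrow> nat \<Rightarrow> nat" where
  "BB c0 c1 e n = n div LL c0 c1 e n"
definition AL :: "nat \<Rightarrow> nat \<Rightarrow> real \<Rightarrow> nat \<Rightarrow> 'a set" where
  "AL c0 c1 e n = {\<omega> \<in> space M. \<forall>b < BB c0 c1 e n.
      \<not> kL e n \<le> cnt 0 (blk (LL c0 c1 e n) b (path (BB c0 c1 e n * LL c0 c1 e n) \<omega>))}"

lemma AL_sets: "AL c0 c1 e n \<in> sets M"
proof -
  let ?P = "\<lambda>w. \<forall>b < BB c0 c1 e n. \<not> kL e n \<le> cnt 0 (blk (LL c0 c1 e n) b w)"
  have "AL c0 c1 e n = path (BB c0 c1 e n * LL c0 c1 e n) -` {w. ?P w} \<inter> space M"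
    by (auto simp: AL_def)
  then show ?thesis using measurable_sets[OF path_meas] by simp
qed

definition piL :: "nat \<Rightarrow> nat \<Rightarrow> real" where
  "piL L k = (\<Sum>u\<in>Wn L. wt u * (if k \<le> cnt 0 u then 1 else 0))"

lemma prob_AL: "prob (AL c0 c1 e n) = (1 - piL (LL c0 c1 e n) (kL e n)) ^ BB c0 c1 e n"
proof -
  let ?L = "LL c0 c1 e n" and ?B = "BB c0 c1 e n" and ?k = "kL e n"
  have "prob (AL c0 c1 e n) = (\<Sum>w\<in>Wn (?B * ?L). wt w *
      (if \<forall>b < ?B. \<not> ?k \<le> cnt 0 (blk ?L b w) then 1 else 0))"
    unfolding AL_def by (rule prob_path)
  also have "\<dots> = (\<Sum>w\<in>Wn (?B * ?L). wt w * (\<Prod>b<?B. (\<lambda>u. if \<not> ?k \<le> cnt 0 u then 1 else 0) (blk ?L b w)))"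
    by (simp only: prod_if01)
  also have "\<dots> = (\<Sum>u\<in>Wn ?L. wt u * (if \<not> ?k \<le> cnt 0 u then 1 else 0)) ^ ?B"
    by (rule sum_blocks)
  also have "(\<Sum>u\<in>Wn ?L. wt u * (if \<not> ?k \<le> cnt 0 u then 1 else 0)) = 1 - piL ?L ?k"
  proof -
    have "(\<Sum>u\<in>Wn ?L. wt u * (if \<not> ?k \<le> cnt 0 u then 1 else 0))
        = (\<Sum>u\<in>Wn ?L. wt u - wt u * (if ?k \<le> cnt 0 u then 1 else 0))"
      by (intro sum.cong) auto
    also have "\<dots> = 1 - piL ?L ?k" by (simp add: sum_subtractf sum_wt piL_def)
    finally show ?thesis .
  qed
  finally show ?thesis .
qed

lemma piL_le1: "piL L k \<le> 1"
proof -
  have "piL L k \<le> (\<Sum>u\<in>Wn L. wt u)" unfolding piL_def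
    by (intro sum_mono) (auto simp: wt_nonneg)
  then show ?thesis by (simp add: sum_wt)
qed

lemma piL_lower:
  assumes c0: "r ^ c0 \<le> lam" and c1: "r ^ c1 \<le> lam / 4" and k: "1 \<le> k"
  shows "lam ^ k / 2 \<le> piL (c0 * (k + 1) + c1) k"
proof -
  let ?L = "c0 * (k + 1) + c1"
  have "r ^ ?L = (r ^ c0) ^ (k + 1) * r ^ c1" by (simp add: power_add power_mult)
  also have "\<dots> \<le> lam ^ (k + 1) * (lam / 4)"
    using c0 c1 r0 lam0 by (intro mult_mono power_mono) auto
  finally have rl: "r ^ ?L \<le> lam ^ (k + 1) * (lam / 4)" .
  have "2 * r ^ ?L / lam \<le> 2 * (lam ^ (k + 1) * (lam / 4)) / lam"
    using rl lam0 by (intro divide_right_mono mult_left_mono) auto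
  also have "\<dots> = lam ^ k * lam / 2" using lam0 by (simp add: field_simps)
  also have "\<dots> \<le> lam ^ k / 2" using lam0 lam1 by (simp add: field_simps)
  finally have "2 * r ^ ?L / lam \<le> lam ^ k / 2" .
  moreover have "lam ^ k - 2 * r ^ ?L / lam \<le> piL ?L k"
    unfolding piL_def using lower_sum[OF k] .
  ultimately show ?thesis by linarith
qed


lemma AL_bound:
  assumes e: "0 < e" "e < 1" and c0: "1 \<le> c0" "r ^ c0 \<le> lam" and c1: "r ^ c1 \<le> lam / 4"
    and n: "3 \<le> n"
  shows "prob (AL c0 c1 e n) \<le> exp (1 / 2) * exp (- ((lam * e / (4 * (c0 * (kap + 2) + c1))) * real n powr (e / 2)))"
proof -
  define k where "k = kL e n"
  define L where "L = LL c0 c1 e n"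
  define B where "B = BB c0 c1 e n"
  define y where "y = ln (real n)"
  define D where "D = real c0 * (kap + 2) + real c1"
  define c where "c = lam * e / (4 * D)"
  have n0: "0 < real n" using n by simp
  have y1: "1 \<le> y"
  proof -
    have "ln (exp 1) \<le> ln (3::real)" using exp_le by (subst ln_le_cancel_iff) auto
    also have "\<dots> \<le> y" unfolding y_def using n by (subst ln_le_cancel_iff) auto
    finally show ?thesis by simp
  qed
  have D0: "0 < D" using c0 kap0 by (simp add: D_def add_pos_nonneg)
  have k1: "1 \<le> k" by (simp add: k_def kL_def)
  have kle: "real k \<le> (1 - e) * kap * y + 1"
  proof -
    have "0 \<le> (1 - e) * kap * y" using e kap0 y1 by simp
    then show ?thesis unfolding k_def kL_def y_def by simp
  qed
  have kge: "(1 - e) * kap * y \<le> real k" unfolding k_def kL_def y_def by linarith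
  have Ldef: "L = c0 * (k + 1) + c1" by (simp add: L_def LL_def k_def)
  have L0: "0 < L" using c0 by (simp add: Ldef)
  have LD: "real L \<le> D * y"
  proof -
    have "real L = real c0 * (real k + 1) + real c1" by (simp add: Ldef algebra_simps)
    also have "\<dots> \<le> real c0 * ((1 - e) * kap * y + 2) + real c1"
      using kle by (intro add_right_mono mult_left_mono) auto
    also have "\<dots> \<le> real c0 * (kap * y + 2 * y) + real c1 * y"
    proof -
      have "(1 - e) * kap * y \<le> kap * y" using e kap0 y1 by (simp add: mult_le_cancel_right1 mult_right_le_one_le)
      then have "real c0 * ((1 - e) * kap * y + 2) \<le> real c0 * (kap * y + 2 * y)"
        using y1 by (intro mult_left_mono) auto
      moreover have "real c1 \<le> real c1 * y" using y1 by (simp add: mult_le_cancel_left1)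
      ultimately show ?thesis by linarith
    qed
    also have "\<dots> = D * y" by (simp add: D_def algebra_simps)
    finally show ?thesis .
  qed
  define P where "P = lam ^ k"
  have P1: "P \<le> 1" using lam0 lam1 by (simp add: P_def power_le_one)
  have Pge: "lam * real n powr (e - 1) \<le> P"
  proof -
    have "lam powr ((1 - e) * kap * y + 1) \<le> P" unfolding P_def by (rule lam_pow_ge[OF kle])
    moreover have "lam powr ((1 - e) * kap * y + 1) = lam * real n powr (e - 1)"
    proof -
      have "(1 - e) * kap * y + 1 = kap * ((1 - e) * y) + 1" by (simp add: algebra_simps)
      then have "lam powr ((1 - e) * kap * y + 1) = lam powr (kap * ((1 - e) * y)) * lam powr 1"
        by (simp only: powr_add)
      then have "lam powr ((1 - e) * kap * y + 1) = lam powr (kap * ((1 - e) * y)) * lam"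
        using lam0 by simp
      also have "\<dots> = exp (- ((1 - e) * y)) * lam" by (simp add: lam_powr_kap)
      also have "exp (- ((1 - e) * y)) = real n powr (e - 1)"
        using n0 by (simp add: powr_def y_def algebra_simps)
      finally show ?thesis by simp
    qed
    ultimately show ?thesis by simp
  qed
  have piP: "P / 2 \<le> piL L k" unfolding P_def Ldef by (rule piL_lower[OF c0(2) c1 k1])
  have pi1: "piL L k \<le> 1" by (rule piL_le1)
  have "prob (AL c0 c1 e n) = (1 - piL L k) ^ B"
    unfolding prob_AL L_def k_def B_def ..
  also have "\<dots> \<le> exp (- piL L k) ^ B"
    using pi1 exp_ge_add_one_self[of "- piL L k"] by (intro power_mono) auto
  also have "\<dots> = exp (real B * (- piL L k))" by (simp only: exp_of_nat_mult)
  also have "\<dots> \<le> exp (- (P / 2 * real B))"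
  proof -
    have "P / 2 * real B \<le> piL L k * real B" by (rule mult_right_mono[OF piP]) simp
    then show ?thesis by (simp add: mult_ac)
  qed
  also have "\<dots> \<le> exp (1 / 2) * exp (- (c * real n powr (e / 2)))"
  proof -
    have Bge: "real n / (D * y) - 1 \<le> real B"
    proof -
      have "real n / (D * y) \<le> real n / real L"
        using LD L0 n0 by (intro divide_left_mono) auto
      then show ?thesis using div_lower[OF L0, of n] by (simp add: B_def BB_def L_def)
    qed
    have "P * real B \<ge> P * (real n / (D * y)) - 1"
    proof -
      have "P * (real n / (D * y) - 1) \<le> P * real B"
        using Bge lam0 by (intro mult_left_mono) (auto simp: P_def)
      then show ?thesis using P1 by (simp add: right_diff_distrib)
    qed
    moreover have "P * (real n / (D * y)) \<ge> lam * real n powr e / (D * y)"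
    proof -
      have "lam * real n powr (e - 1) * (real n / (D * y)) \<le> P * (real n / (D * y))"
        using Pge D0 y1 by (intro mult_right_mono) auto
      moreover have "lam * real n powr (e - 1) * (real n / (D * y)) = lam * real n powr e / (D * y)"
      proof -
        have pp: "real n powr (e - 1) * real n = real n powr e" using n0 by (simp add: powr_diff)
        have "lam * real n powr (e - 1) * (real n / (D * y)) = lam * (real n powr (e - 1) * real n) / (D * y)"
          by simp
        then show ?thesis by (simp only: pp)
      qed
      ultimately show ?thesis by linarith
    qed
    moreover have "lam * real n powr e / (D * y) \<ge> 2 * c * real n powr (e / 2)"
    proof -
      have ly: "y \<le> real n powr (e / 2) / (e / 2)" unfolding y_def
        using n e by (intro ln_le_powr) auto
      have pe: "real n powr e = real n powr (e / 2) * real n powr (e / 2)"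
        by (simp add: powr_add[symmetric])
      have pos: "0 < real n powr (e / 2)" using n0 by simp
      have "2 * c * real n powr (e / 2) = lam * (e / 2) * real n powr (e / 2) / D"
        using D0 by (simp add: c_def field_simps)
      also have "\<dots> = lam * real n powr e / (D * (real n powr (e / 2) / (e / 2)))"
        using D0 pos e by (simp add: pe field_simps)
      also have "\<dots> \<le> lam * real n powr e / (D * y)"
        using ly D0 y1 lam0 n0 by (intro divide_left_mono mult_left_mono mult_pos_pos) auto
      finally show ?thesis .
    qed
    ultimately have "P * real B \<ge> 2 * c * real n powr (e / 2) - 1" by linarith
    then have "- (P / 2 * real B) \<le> 1 / 2 + - (c * real n powr (e / 2))" by linarith
    then show ?thesis by (simp flip: exp_add)
  qed
  finally show ?thesis unfolding c_def D_def .
qed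


lemma LB:
  assumes e: "0 < e" "e < 1"
  shows "AE \<omega> in M. eventually (\<lambda>n. (1 - e) * kap \<le> real (rw_Xi_star X {0, z} n \<omega>) / ln (real n)) sequentially"
proof -
  obtain c0 where c0: "1 \<le> c0" "r ^ c0 \<le> lam" using r_small[OF lam0] by blast
  obtain c1 where c1: "r ^ c1 \<le> lam / 4" using r_small[of "lam / 4"] lam0 by auto
  define C where "C = lam * e / (4 * (c0 * (kap + 2) + c1))"
  have C0: "0 < C" using lam0 e c0 kap0 by (simp add: C_def add_pos_nonneg)
  have "summable (\<lambda>n. exp (1 / 2) * exp (- (C * real n powr (e / 2))))"
    using C0 e by (intro summable_mult summable_exp_powr) auto
  then have "summable (\<lambda>n. measure M (AL c0 c1 e n))"
    by (rule summable_comparison_test'[where N=3]) (use AL_bound[OF e c0 c1] in \<open>auto simp: C_def\<close>)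
  then have "AE \<omega> in M. eventually (\<lambda>n. \<omega> \<in> space M - AL c0 c1 e n) sequentially"
    by (intro borel_cantelli_AE1 AL_sets) (auto simp: less_top[symmetric])
  then show ?thesis
  proof eventually_elim
    case (elim \<omega>)
    from elim obtain N where N: "\<And>n. n \<ge> N \<Longrightarrow> \<omega> \<in> space M - AL c0 c1 e n"
      by (auto simp: eventually_sequentially)
    show ?case
      unfolding eventually_sequentially
    proof (intro exI[of _ "max 3 N"] allI impI)
      fix n :: nat assume n: "max 3 N \<le> n"
      have lnpos: "0 < ln (real n)" using n by simp
      from N[of n] n obtain b where b: "b < BB c0 c1 e n"
        "kL e n \<le> cnt 0 (blk (LL c0 c1 e n) b (path (BB c0 c1 e n * LL c0 c1 e n) \<omega>))"
        by (auto simp: AL_def)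
      have "BB c0 c1 e n * LL c0 c1 e n \<le> n" by (simp add: BB_def div_times_less_eq_dividend)
      then have "kL e n \<le> rw_Xi_star X {0, z} n \<omega>"
        using block_event[OF b(1)] b(2) order_trans by blast
      moreover have "(1 - e) * kap * ln (real n) \<le> real (kL e n)" unfolding kL_def by linarith
      ultimately have "(1 - e) * kap * ln (real n) \<le> real (rw_Xi_star X {0, z} n \<omega>)"
        by (meson of_nat_le_iff order_trans)
      then show "(1 - e) * kap \<le> real (rw_Xi_star X {0, z} n \<omega>) / ln (real n)"
        using lnpos by (simp add: field_simps)
    qed
  qed
qed

end


context rwp begin

lemma main_tendsto: "AE \<omega> in M. (\<lambda>n. real (rw_Xi_star X {0, z} n \<omega>) / ln (real n)) \<longlonglongrightarrow> kap"
proof -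
  have U: "AE \<omega> in M. \<forall>m::nat. eventually (\<lambda>n. real (rw_Xi_star X {0, z} n \<omega>) / ln (real n)
            \<le> (1 + 1 / (real m + 1)) * kap + ((1 + 1 / (real m + 1)) * kap * ln 2 + 1) / ln (real n)) sequentially"
    unfolding AE_all_countable by (intro allI UB) (simp add: add_pos_pos)
  have L: "AE \<omega> in M. \<forall>m::nat. eventually (\<lambda>n. (1 - 1 / (real m + 2)) * kap
            \<le> real (rw_Xi_star X {0, z} n \<omega>) / ln (real n)) sequentially"
    unfolding AE_all_countable by (intro allI LB) auto
  from U L show ?thesis
  proof eventually_elim
    case (elim \<omega>)
    note UL = elim
    define f where "f n = real (rw_Xi_star X {0, z} n \<omega>) / ln (real n)" for n
    have lnlim: "filterlim (\<lambda>n. ln (real n)) at_infinity sequentially"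
      by (intro filterlim_at_top_imp_at_infinity filterlim_compose[OF ln_at_top filterlim_real_sequentially])
    show ?case
    proof (rule tendsto_iff[THEN iffD2], intro allI impI)
      fix d :: real assume d: "0 < d"
      obtain m :: nat where m: "2 * kap / d < real m" using reals_Archimedean2 by blast
      have m1: "kap / (real m + 1) < d / 2"
      proof -
        have "2 * kap < real m * d" using m d by (simp add: field_simps)
        then have "2 * kap < (real m + 1) * d" using d by (simp add: algebra_simps)
        then show ?thesis using d by (simp add: field_simps)
      qed
      have m2: "kap / (real m + 2) < d"
      proof -
        have "kap / (real m + 2) \<le> kap / (real m + 1)" using kap0 by (intro divide_left_mono) auto
        then show ?thesis using m1 d by linarith
      qed
      define K where "K = (1 + 1 / (real m + 1)) * kap * ln 2 + 1"
      have "((\<lambda>n. K / ln (real n)) \<longlonglongrightarrow> 0)"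
        by (rule tendsto_divide_0[OF tendsto_const lnlim])
      then have ev: "eventually (\<lambda>n. K / ln (real n) < d / 2) sequentially"
        using d by (intro order_tendstoD) auto
      have U1: "eventually (\<lambda>n. f n \<le> (1 + 1 / (real m + 1)) * kap + K / ln (real n)) sequentially"
        using UL(1) unfolding f_def K_def by blast
      have L1: "eventually (\<lambda>n. (1 - 1 / (real m + 2)) * kap \<le> f n) sequentially"
        using UL(2) unfolding f_def by blast
      have "eventually (\<lambda>n. dist (f n) kap < d) sequentially"
        using U1 L1 ev
      proof eventually_elim
        case (elim n)
        have "f n \<le> kap + kap / (real m + 1) + K / ln (real n)"
          using elim(1) by (simp add: algebra_simps)
        then have up: "f n < kap + d" using m1 elim(3) by linarith
        have "kap - kap / (real m + 2) \<le> f n"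
          using elim(2) by (simp add: algebra_simps)
        then have lo: "kap - d < f n" using m2 by linarith
        show ?case using up lo by (simp add: dist_real_def abs_less_iff)
      qed
      then show "eventually (\<lambda>n. dist (real (rw_Xi_star X {0, z} n \<omega>) / ln (real n)) kap < d) sequentially"
        by (simp add: f_def)
    qed
  qed
qed

end

theorem theorem3p2:
  fixes M :: "'a measure" and X :: "nat \<Rightarrow> 'a \<Rightarrow> int"
    and p q h :: real and z :: int
  assumes "prob_space M"
    and "0 < q" and "q < p" and "p < 1" and "p + q = 1" and "h = q / p"
    and "prob_space.indep_vars M (\<lambda>_. count_space UNIV) X UNIV"
    and "\<And>i. measure M {\<omega> \<in> space M. X i \<omega> = 1} = p"
    and "\<And>i. measure M {\<omega> \<in> space M. X i \<omega> = -1} = q"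
    and "z > 0"
  shows "AE \<omega> in M.
    (\<lambda>n. real (rw_Xi_star X {0, z} n \<omega>) / ln (real n))
      \<longlonglongrightarrow> -1 / ln ((2 * q + h powr (real_of_int z / 2)) / (1 + h powr (real_of_int z / 2)))"
proof -
  interpret rw p q z using assms by unfold_locales auto
  interpret P: prob_space M by (rule assms(1))
  interpret rwp p q z M X
  proof unfold_locales
    show "P.indep_vars (\<lambda>_. count_space UNIV) X UNIV" by (rule assms(7))
    show "\<And>i. P.prob {\<omega> \<in> space M. X i \<omega> = 1} = p" by (rule assms(8))
    show "\<And>i. P.prob {\<omega> \<in> space M. X i \<omega> = -1} = q" by (rule assms(9))
  qed
  have "h = rw.h p q" using assms(6) by (simp add: h_def)
  then have "-1 / ln ((2 * q + h powr (real_of_int z / 2)) / (1 + h powr (real_of_int z / 2))) = kap"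
    by (simp add: kap_def lam_def s_def)
  then show ?thesis using main_tendsto by simp
qed


end
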